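(* Let $G$ be a graph of girth at least five and maximum average degree $d\ge2$. Every fractional $2$-guidance system and every weak $2$-guidance system of $G$ has maximum outdegree at least $d/2$.
   Context: All graphs are finite, simple and undirected. The maximum average degree of $G$ is the maximum average degree of its subgraphs. For $u,v$ at distance $\ell$, $\Gamma_G(u,v)$ is the set of neighbors of $u$ at distance $\ell-1$ from $v$. A partial orientation of $G$ is a directed graph $\vec{H}$ on $V(G)$ with every $(u,v)\in E(\vec{H})$ satisfying $uv\in E(G)$. $B_{\vec{H}}(v,a)$ is the set of vertices reachable from $v$ by a directed path of length at most $a$. A weak $r$-guidance system is a partial orientation $\vec{H}$ such that for any distinct $u,v$ at distance $\ell\le r$ there exist non-negative integers $a,b$ with $a+b=\ell-1$ such that $G$ has an edge between $B_{\vec{H}}(u,a)$ and $B_{\vec{H}}(v,b)$. A fractional orientation assigns a non-negative real $p(u,v)$ to each ordered pair of adjacent vertices; its maximum outdegree is $\max_u\sum_{v:uv\in E(G)}p(u,v)$. A fractional $r$-guidance system is a fractional orientation with $\sum_{y\in\Gamma_G(u,v)}p(u,y)+\sum_{y\in\Gamma_G(v,u)}p(v,y)\ge1$ for all $u,v$ at distance between $2$ and $r$. *)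

theory Defs
  imports Complex_Main
begin

definition simple_graph :: "'a set \<Rightarrow> 'a set set \<Rightarrow> bool" where
  "simple_graph V E \<longleftrightarrow> finite V \<and>
     (\<forall>e\<in>E. \<exists>u v. e = {u, v} \<and> u \<noteq> v \<and> u \<in> V \<and> v \<in> V)"

definition adj :: "'a set set \<Rightarrow> 'a \<Rightarrow> 'a \<Rightarrow> bool" where
  "adj E u v \<longleftrightarrow> {u, v} \<in> E"

definition nbrs :: "'a set \<Rightarrow> 'a set set \<Rightarrow> 'a \<Rightarrow> 'a set" where
  "nbrs V E u = {v \<in> V. adj E u v}"

definition walk :: "'a set set \<Rightarrow> 'a list \<Rightarrow> bool" where
  "walk E xs \<longleftrightarrow> xs \<noteq> [] \<and> (\<forall>i. Suc i < length xs \<longrightarrow> adj E (xs ! i) (xs ! Suc i))"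

definition cycle :: "'a set set \<Rightarrow> 'a list \<Rightarrow> bool" where
  "cycle E xs \<longleftrightarrow> length xs \<ge> 3 \<and> distinct xs \<and> walk E xs \<and> adj E (last xs) (hd xs)"

text \<open>Girth at least g (vacuous for forests, whose girth is infinite).\<close>
definition girth_at_least :: "'a set set \<Rightarrow> nat \<Rightarrow> bool" where
  "girth_at_least E g \<longleftrightarrow> (\<forall>xs. cycle E xs \<longrightarrow> length xs \<ge> g)"

definition mad :: "'a set \<Rightarrow> 'a set set \<Rightarrow> real" where
  "mad V E = Max {2 * real (card F) / real (card S) | S F.
      S \<subseteq> V \<and> S \<noteq> {} \<and> F \<subseteq> E \<and> (\<forall>e\<in>F. e \<subseteq> S)}"

definition dist_le :: "'a set set \<Rightarrow> 'a \<Rightarrow> 'a \<Rightarrow> nat \<Rightarrow> bool" where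
  "dist_le E u v n \<longleftrightarrow> (\<exists>xs. walk E xs \<and> hd xs = u \<and> last xs = v \<and> length xs \<le> Suc n)"

definition gdist :: "'a set set \<Rightarrow> 'a \<Rightarrow> 'a \<Rightarrow> nat \<Rightarrow> bool" where
  "gdist E u v l \<longleftrightarrow> dist_le E u v l \<and> (\<forall>m<l. \<not> dist_le E u v m)"

definition Gamma :: "'a set \<Rightarrow> 'a set set \<Rightarrow> 'a \<Rightarrow> 'a \<Rightarrow> 'a set" where
  "Gamma V E u v = {y \<in> nbrs V E u. \<exists>l. gdist E u v l \<and> gdist E y v (l - 1)}"

definition partial_orientation :: "'a set \<Rightarrow> 'a set set \<Rightarrow> ('a \<times> 'a) set \<Rightarrow> bool" where
  "partial_orientation V E H \<longleftrightarrow> (\<forall>(u, v)\<in>H. adj E u v)"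

definition Ball_H :: "('a \<times> 'a) set \<Rightarrow> 'a \<Rightarrow> nat \<Rightarrow> 'a set" where
  "Ball_H H v a = {w. \<exists>k\<le>a. (v, w) \<in> H ^^ k}"

definition weak_guidance :: "'a set \<Rightarrow> 'a set set \<Rightarrow> nat \<Rightarrow> ('a \<times> 'a) set \<Rightarrow> bool" where
  "weak_guidance V E r H \<longleftrightarrow> partial_orientation V E H \<and>
     (\<forall>u\<in>V. \<forall>v\<in>V. \<forall>l. u \<noteq> v \<and> gdist E u v l \<and> l \<le> r \<longrightarrow>
        (\<exists>a b. a + b = l - 1 \<and>
           (\<exists>x\<in>Ball_H H u a. \<exists>y\<in>Ball_H H v b. adj E x y)))"

definition max_outdeg :: "'a set \<Rightarrow> ('a \<times> 'a) set \<Rightarrow> real" where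
  "max_outdeg V H = Max ((\<lambda>u. real (card {v. (u, v) \<in> H})) ` V)"

definition fractional_orientation :: "'a set \<Rightarrow> 'a set set \<Rightarrow> ('a \<Rightarrow> 'a \<Rightarrow> real) \<Rightarrow> bool" where
  "fractional_orientation V E p \<longleftrightarrow> (\<forall>u\<in>V. \<forall>v\<in>V. adj E u v \<longrightarrow> p u v \<ge> 0)"

definition frac_max_outdeg :: "'a set \<Rightarrow> 'a set set \<Rightarrow> ('a \<Rightarrow> 'a \<Rightarrow> real) \<Rightarrow> real" where
  "frac_max_outdeg V E p = Max ((\<lambda>u. \<Sum>v\<in>nbrs V E u. p u v) ` V)"

definition fractional_guidance :: "'a set \<Rightarrow> 'a set set \<Rightarrow> nat \<Rightarrow> ('a \<Rightarrow> 'a \<Rightarrow> real) \<Rightarrow> bool" where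
  "fractional_guidance V E r p \<longleftrightarrow> fractional_orientation V E p \<and>
     (\<forall>u\<in>V. \<forall>v\<in>V. \<forall>l. gdist E u v l \<and> 2 \<le> l \<and> l \<le> r \<longrightarrow>
        (\<Sum>y\<in>Gamma V E u v. p u y) + (\<Sum>y\<in>Gamma V E v u. p v y) \<ge> 1)"

end

theory Submission imports Defs begin

lemma sg_edge: assumes "simple_graph V E" "e \<in> E"
  shows "\<exists>u v. e = {u,v} \<and> u \<noteq> v \<and> u \<in> V \<and> v \<in> V"
  using assms unfolding simple_graph_def by blast

lemma sg_finE: assumes "simple_graph V E" shows "finite E"
proof -
  have "E \<subseteq> Pow V" using sg_edge[OF assms] by blast
  moreover have "finite V" using assms simple_graph_def by auto
  ultimately show ?thesis by (meson finite_Pow_iff finite_subset)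
qed

lemma adj_sym: "adj E u v = adj E v u" unfolding adj_def by (simp add: insert_commute)

lemma adj_swap: "adj E u v \<Longrightarrow> adj E v u" unfolding adj_def by (simp add: insert_commute)

lemma adj_irr: assumes "simple_graph V E" shows "\<not> adj E u u"
  using sg_edge[OF assms, of "{u}"] unfolding adj_def by (metis doubleton_eq_iff insert_absorb2)

lemma adj_V: assumes "simple_graph V E" "adj E u v" shows "u \<in> V" "v \<in> V"
  using sg_edge[OF assms(1), of "{u,v}"] assms(2) unfolding adj_def by (auto simp: doubleton_eq_iff)

lemma walk_Cons2: "walk E (x#y#xs) \<longleftrightarrow> adj E x y \<and> walk E (y#xs)"
proof
  assume h: "walk E (x#y#xs)"
  have h2: "\<And>i. Suc i < length (x#y#xs) \<Longrightarrow> adj E ((x#y#xs) ! i) ((x#y#xs) ! Suc i)"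
    using h unfolding walk_def by blast
  have "adj E x y" using h2[of 0] by simp
  moreover have "walk E (y#xs)" unfolding walk_def
  proof (intro conjI allI impI)
    fix i assume "Suc i < length (y#xs)"
    then show "adj E ((y # xs) ! i) ((y # xs) ! Suc i)" using h2[of "Suc i"] by simp
  qed simp
  ultimately show "adj E x y \<and> walk E (y#xs)" ..
next
  assume h: "adj E x y \<and> walk E (y#xs)"
  have h2: "\<And>i. Suc i < length (y#xs) \<Longrightarrow> adj E ((y#xs) ! i) ((y#xs) ! Suc i)"
    using h unfolding walk_def by blast
  show "walk E (x#y#xs)" unfolding walk_def
  proof (intro conjI allI impI)
    fix i assume "Suc i < length (x#y#xs)"
    then show "adj E ((x#y#xs) ! i) ((x#y#xs) ! Suc i)"
    proof (cases i)
      case 0 then show ?thesis using h by simp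
    next
      case (Suc j) then show ?thesis using h2[of j] \<open>Suc i < length (x#y#xs)\<close> by simp
    qed
  qed simp
qed

lemma walk_single: "walk E [x]" by (simp add: walk_def)

lemma no_tri: assumes sg: "simple_graph V E" and g: "girth_at_least E 5"
  and a: "adj E u v" "adj E v w" "adj E w u" shows False
proof -
  have "u \<noteq> v" "v \<noteq> w" "w \<noteq> u" using a adj_irr[OF sg] by metis+
  then have "cycle E [u,v,w]" unfolding cycle_def using a by (simp add: walk_Cons2 walk_single)
  then show False using g unfolding girth_at_least_def by force
qed

lemma no_sq: assumes sg: "simple_graph V E" and g: "girth_at_least E 5"
  and a: "adj E u v" "adj E v w" "adj E w y" "adj E y u" "u \<noteq> w" "v \<noteq> y" shows False
proof -
  have "u \<noteq> v" "v \<noteq> w" "w \<noteq> y" "y \<noteq> u" using a adj_irr[OF sg] by metis+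
  then have "cycle E [u,v,w,y]" unfolding cycle_def using a by (simp add: walk_Cons2 walk_single)
  then show False using g unfolding girth_at_least_def by force
qed

lemma dist0: assumes "dist_le E u v 0" shows "u = v"
proof -
  obtain xs where h: "walk E xs" "hd xs = u" "last xs = v" "length xs \<le> 1"
    using assms unfolding dist_le_def by auto
  have "xs \<noteq> []" using h walk_def by auto
  then obtain a ys where xs: "xs = a # ys" by (cases xs) auto
  then have "ys = []" using h by simp
  then show ?thesis using h xs by simp
qed

lemma dist1: assumes "dist_le E u v 1" shows "u = v \<or> adj E u v"
proof -
  obtain xs where h: "walk E xs" "hd xs = u" "last xs = v" "length xs \<le> 2"
    using assms unfolding dist_le_def by auto
  have "xs \<noteq> []" using h walk_def by auto
  then obtain a ys where xs: "xs = a # ys" by (cases xs) auto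
  show ?thesis
  proof (cases ys)
    case Nil then show ?thesis using h xs by simp
  next
    case (Cons b zs)
    then have "zs = []" using h xs by simp
    then show ?thesis using h xs Cons by (simp add: walk_Cons2)
  qed
qed

lemma dist_refl: "dist_le E u u 0"
  unfolding dist_le_def by (rule exI[of _ "[u]"]) (simp add: walk_single)

lemma gdist_uniq: "gdist E u v l \<Longrightarrow> gdist E u v l' \<Longrightarrow> l = l'"
  by (metis gdist_def linorder_neqE_nat)

lemma gdist2: assumes "adj E u v" "adj E v w" "u \<noteq> w" "\<not> adj E u w"
  shows "gdist E u w 2"
proof -
  have "dist_le E u w 2" unfolding dist_le_def
    by (rule exI[of _ "[u,v,w]"]) (simp add: walk_Cons2 walk_single assms)
  moreover have "\<not> dist_le E u w m" if "m < 2" for m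
  proof
    assume d: "dist_le E u w m"
    have "m = 0 \<or> m = 1" using that by auto
    then show False
    proof
      assume "m = 0" then show False using d dist0[of E u w] assms(3) by simp
    next
      assume "m = 1" then show False using d dist1[of E u w] assms(3,4) by simp
    qed
  qed
  ultimately show ?thesis unfolding gdist_def by auto
qed

lemma gdist1: assumes "adj E v w" "v \<noteq> w" shows "gdist E v w 1"
proof -
  have "dist_le E v w 1" unfolding dist_le_def
    by (rule exI[of _ "[v,w]"]) (simp add: walk_Cons2 walk_single assms)
  moreover have "\<not> dist_le E v w m" if "m < 1" for m using that dist0[of E v w] assms(2) by auto
  ultimately show ?thesis unfolding gdist_def by blast
qed

lemma Gamma_single: assumes sg: "simple_graph V E" and g: "girth_at_least E 5"
  and a: "adj E u v" "adj E v w" "u \<noteq> w"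
  shows "Gamma V E u w = {v}"
proof -
  have nuw: "\<not> adj E u w" using no_tri[OF sg g a(1,2)] adj_swap[of E u w] by blast
  have g2: "gdist E u w 2" using gdist2[OF a nuw] .
  have vw: "v \<noteq> w" using a(2) adj_irr[OF sg] by metis
  have "v \<in> Gamma V E u w" unfolding Gamma_def nbrs_def
    using g2 gdist1[OF a(2) vw] a(1) adj_V[OF sg a(1)] by force
  moreover have "y = v" if y: "y \<in> Gamma V E u w" for y
  proof -
    obtain l where l: "adj E u y" "gdist E u w l" "gdist E y w (l - 1)"
      using y unfolding Gamma_def nbrs_def by auto
    have "l = 2" using gdist_uniq[OF l(2) g2] .
    then have "dist_le E y w 1" "\<not> dist_le E y w 0" using l(3) unfolding gdist_def by auto
    then have "adj E y w" using dist1 dist_refl by metis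
    then show "y = v" using no_sq[OF sg g a(1,2) adj_swap[OF \<open>adj E y w\<close>] adj_swap[OF l(1)] a(3)] by blast
  qed
  ultimately show ?thesis by blast
qed


lemma half_bound:
  fixes q :: "'b \<Rightarrow> real"
  assumes fin: "finite N" and c2: "card N \<ge> 2"
    and pr: "\<And>u w. u \<in> N \<Longrightarrow> w \<in> N \<Longrightarrow> u \<noteq> w \<Longrightarrow> q u + q w \<ge> 1"
  shows "sum q N \<ge> real (card N) / 2"
proof (cases "\<forall>u\<in>N. q u \<ge> 1/2")
  case True
  then have "sum q N \<ge> sum (\<lambda>_. 1/2) N" by (intro sum_mono) auto
  then show ?thesis by simp
next
  case False
  then obtain u0 where u0: "u0 \<in> N" "q u0 < 1/2" by auto
  have s1: "sum q N = q u0 + sum q (N - {u0})" using sum.remove[OF fin u0(1)] .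
  have s2: "sum q (N - {u0}) \<ge> sum (\<lambda>_. 1 - q u0) (N - {u0})"
  proof (rule sum_mono)
    fix w assume "w \<in> N - {u0}"
    then have "q u0 + q w \<ge> 1" using pr u0(1) by auto
    then show "1 - q u0 \<le> q w" by simp
  qed
  have s3: "sum (\<lambda>_. 1 - q u0) (N - {u0}) = (real (card N) - 1) * (1 - q u0)"
    using card_Diff_singleton[OF u0(1)] fin u0(1) c2 by (simp add: of_nat_diff)
  define k where "k = real (card N)"
  have k2: "k \<ge> 2" using c2 k_def by simp
  have "(k - 2) * q u0 \<le> (k - 2) * (1/2)" using k2 u0(2) by (intro mult_left_mono) auto
  then have "q u0 + (k - 1) * (1 - q u0) \<ge> k / 2" by (simp add: algebra_simps)
  then have "q u0 + (real (card N) - 1) * (1 - q u0) \<ge> real (card N) / 2" by (simp add: k_def)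
  then show ?thesis using s1 s2 s3 by linarith
qed

lemma handshake:
  assumes finS: "finite S" and finF: "finite F"
    and eS: "\<And>e. e \<in> F \<Longrightarrow> e \<subseteq> S" and e2: "\<And>e. e \<in> F \<Longrightarrow> card e = 2"
  shows "(\<Sum>y\<in>S. card {e\<in>F. y \<in> e}) = 2 * card F"
proof -
  have "(\<Sum>y\<in>S. card {e\<in>F. y \<in> e}) = (\<Sum>y\<in>S. \<Sum>e\<in>F. if y \<in> e then 1 else 0)"
  proof (rule sum.cong)
    fix y
    have "card {e\<in>F. y \<in> e} = (\<Sum>e\<in>{e\<in>F. y \<in> e}. 1)" by (rule card_eq_sum)
    also have "\<dots> = (\<Sum>e\<in>F. if y \<in> e then 1 else 0)" by (rule sum.inter_filter[OF finF])
    finally show "card {e\<in>F. y \<in> e} = (\<Sum>e\<in>F. if y \<in> e then 1 else 0)" .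
  qed simp
  also have "\<dots> = (\<Sum>e\<in>F. \<Sum>y\<in>S. if y \<in> e then 1 else 0)" by (rule sum.swap)
  also have "\<dots> = (\<Sum>e\<in>F. card {y\<in>S. y \<in> e})"
  proof (rule sum.cong)
    fix e
    have "card {y\<in>S. y \<in> e} = (\<Sum>y\<in>{y\<in>S. y \<in> e}. 1)" by (rule card_eq_sum)
    also have "\<dots> = (\<Sum>y\<in>S. if y \<in> e then 1 else 0)" by (rule sum.inter_filter[OF finS])
    finally show "(\<Sum>y\<in>S. if y \<in> e then 1 else 0) = card {y\<in>S. y \<in> e}" by simp
  qed simp
  also have "\<dots> = (\<Sum>e\<in>F. 2)"
  proof (rule sum.cong)
    fix e assume "e \<in> F"
    then have "{y\<in>S. y \<in> e} = e" using eS by blast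
    then show "card {y\<in>S. y \<in> e} = 2" using e2 \<open>e \<in> F\<close> by simp
  qed simp
  finally show ?thesis by simp
qed


lemma core:
  fixes p :: "'a \<Rightarrow> 'a \<Rightarrow> real" and V :: "'a set" and E :: "'a set set"
  assumes sg: "simple_graph V E" and ne: "V \<noteq> {}" and md: "mad V E = d" and d2: "d \<ge> 2"
    and nn: "\<And>u v. adj E u v \<Longrightarrow> p u v \<ge> 0"
    and pair: "\<And>u v w. adj E u v \<Longrightarrow> adj E w v \<Longrightarrow> u \<noteq> w \<Longrightarrow> p u v + p w v \<ge> 1"
  shows "\<exists>u\<in>V. (\<Sum>y\<in>nbrs V E u. p u y) \<ge> d / 2"
proof -
  have finV: "finite V" using sg simple_graph_def by auto
  have finE: "finite E" using sg_finE[OF sg] .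
  define P where "P S F \<longleftrightarrow> S \<subseteq> V \<and> S \<noteq> {} \<and> F \<subseteq> E \<and> (\<forall>e\<in>F. e \<subseteq> S)"
    for S :: "'a set" and F :: "'a set set"
  define M where "M = {2 * real (card F) / real (card S) | S F. P S F}"
  have mad_eq: "mad V E = Max M" unfolding mad_def M_def P_def by simp
  have M_img: "M = (\<lambda>(S,F). 2 * real (card F) / real (card S)) ` {(S,F). P S F}"
    unfolding M_def by auto
  have "{(S,F). P S F} \<subseteq> Pow V \<times> Pow E" unfolding P_def by auto
  then have "finite {(S,F). P S F}" using finV finE by (meson finite_Pow_iff finite_SigmaI finite_subset)
  then have finM: "finite M" using M_img by simp
  obtain x0 where "x0 \<in> V" using ne by auto
  then have "P {x0} {}" unfolding P_def by auto
  then have neM: "M \<noteq> {}" unfolding M_def by blast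
  have Mle: "2 * real (card F) / real (card S) \<le> d" if "P S F" for S F
  proof -
    have "2 * real (card F) / real (card S) \<in> M" using that unfolding M_def by blast
    then show ?thesis using Max_ge[OF finM] md mad_eq by simp
  qed
  have "d \<in> M" using Max_in[OF finM neM] md mad_eq by simp
  define Q where "Q n \<longleftrightarrow> (\<exists>S F. P S F \<and> 2 * real (card F) / real (card S) = d \<and> card S = n)" for n
  have "\<exists>n. Q n" using \<open>d \<in> M\<close> unfolding M_def Q_def by blast
  then obtain n where Qn: "Q n" and nmin: "\<And>m. m < n \<Longrightarrow> \<not> Q m"
    using exists_least_iff[of Q] by blast
  then obtain S F where PSF: "P S F" and dSF: "2 * real (card F) / real (card S) = d" and cS: "card S = n"
    unfolding Q_def by blast
  have SV: "S \<subseteq> V" and Sne: "S \<noteq> {}" and FE: "F \<subseteq> E" and FS: "\<And>e. e \<in> F \<Longrightarrow> e \<subseteq> S"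
    using PSF unfolding P_def by auto
  have finS: "finite S" using SV finV finite_subset by auto
  have finF: "finite F" using FE finE finite_subset by auto
  have sP: "real (card S) > 0" using finS Sne by (simp add: card_gt_0_iff)
  have edge: "\<exists>a b. e = {a,b} \<and> a \<noteq> b \<and> a \<in> S \<and> b \<in> S" if "e \<in> F" for e
    using sg_edge[OF sg, of e] that FE FS[OF that] by auto
  have e2: "card e = 2" if "e \<in> F" for e using edge[OF that] by auto
  define NF where "NF y = {u\<in>S. {y,u} \<in> F}" for y
  have finNF: "finite (NF y)" for y using finS unfolding NF_def by simp
  have NFnb: "NF y \<subseteq> nbrs V E y" for y unfolding NF_def nbrs_def adj_def using SV FE by auto
  have NFcard: "card (NF y) = card {e\<in>F. y \<in> e}" if "y \<in> S" for y
  proof (rule bij_betw_same_card[of "\<lambda>u. {y,u}"])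
    show "bij_betw (\<lambda>u. {y, u}) (NF y) {e \<in> F. y \<in> e}"
    proof (rule bij_betw_imageI)
      show "inj_on (\<lambda>u. {y, u}) (NF y)" by (rule inj_onI) (auto simp: doubleton_eq_iff)
      show "(\<lambda>u. {y, u}) ` NF y = {e \<in> F. y \<in> e}"
      proof
        show "(\<lambda>u. {y, u}) ` NF y \<subseteq> {e \<in> F. y \<in> e}" unfolding NF_def by auto
        show "{e \<in> F. y \<in> e} \<subseteq> (\<lambda>u. {y, u}) ` NF y"
        proof
          fix e assume "e \<in> {e \<in> F. y \<in> e}"
          then have eF: "e \<in> F" and ye: "y \<in> e" by auto
          obtain a b where ab: "e = {a,b}" "a \<in> S" "b \<in> S" using edge[OF eF] by auto
          show "e \<in> (\<lambda>u. {y, u}) ` NF y"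
          proof (cases "y = a")
            case True
            then have "b \<in> NF y" using ab eF unfolding NF_def by auto
            then show ?thesis using ab True by auto
          next
            case False
            then have "y = b" using ye ab by auto
            then have "a \<in> NF y" using ab eF unfolding NF_def by (auto simp: insert_commute)
            then show ?thesis using ab \<open>y = b\<close> by (auto simp: insert_commute)
          qed
        qed
      qed
    qed
  qed
  have hs: "(\<Sum>y\<in>S. card {e\<in>F. y \<in> e}) = 2 * card F"
    by (rule handshake[OF finS finF FS e2])
  have fs: "real (card F) \<ge> real (card S)"
  proof -
    have "2 \<le> 2 * real (card F) / real (card S)" using dSF d2 by simp
    then show ?thesis using sP by (simp add: le_divide_eq)
  qed
  have mindeg: "card (NF y) \<ge> 2" if yS: "y \<in> S" for y
  proof (rule ccontr)
    assume "\<not> card (NF y) \<ge> 2"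
    then have deg1: "card {e\<in>F. y \<in> e} \<le> 1" using NFcard[OF yS] by simp
    have cS2: "card S \<ge> 2"
    proof (rule ccontr)
      assume "\<not> card S \<ge> 2"
      then have "card S = 1" using finS Sne by (metis One_nat_def card_0_eq less_2_cases not_less)
      then obtain z where "S = {z}" using card_1_singletonE by blast
      then have "F = {}" using edge by fastforce
      then show False using dSF d2 by simp
    qed
    define S' where "S' = S - {y}"
    define F' where "F' = {e\<in>F. y \<notin> e}"
    have cS': "card S' = card S - 1" unfolding S'_def using yS finS by simp
    have S'ne: "S' \<noteq> {}"
    proof
      assume "S' = {}"
      then have "card S' = 0" by simp
      then show False using cS' cS2 by simp
    qed
    have PS': "P S' F'" unfolding P_def F'_def
      using SV FE FS S'ne unfolding S'_def by (auto dest: FS)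
    have "F = F' \<union> {e\<in>F. y \<in> e}" unfolding F'_def by auto
    moreover have "card (F' \<union> {e\<in>F. y \<in> e}) = card F' + card {e\<in>F. y \<in> e}"
      by (rule card_Un_disjoint) (use finF in \<open>auto simp: F'_def\<close>)
    ultimately have "card F = card F' + card {e\<in>F. y \<in> e}" by simp
    then have cF': "real (card F') \<ge> real (card F) - 1" using deg1 by simp
    have r1: "2 * real (card F') / real (card S') \<le> d" using Mle[OF PS'] .
    have sp': "real (card S') = real (card S) - 1" using cS' cS2 by simp
    have sp'0: "real (card S) - 1 > 0" using cS2 by simp
    have "d \<le> 2 * real (card F') / real (card S')"
    proof -
      have "2 * real (card F) * (real (card S) - 1) \<le> 2 * (real (card F) - 1) * real (card S)"
        using fs by (simp add: algebra_simps)
      also have "\<dots> \<le> 2 * real (card F') * real (card S)"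
        using cF' sP by (intro mult_right_mono) auto
      finally have "2 * real (card F) * (real (card S) - 1) \<le> 2 * real (card F') * real (card S)" .
      then have "2 * real (card F) / real (card S) \<le> 2 * real (card F') / (real (card S) - 1)"
        using sP sp'0 by (simp add: divide_simps)
      then show ?thesis using dSF sp' by simp
    qed
    then have "Q (card S')" unfolding Q_def using PS' r1 by auto
    moreover have "card S' < n" using cS' cS2 cS by simp
    ultimately show False using nmin by blast
  qed
  have lb: "(\<Sum>u\<in>NF y. p u y) \<ge> real (card (NF y)) / 2" if yS: "y \<in> S" for y
  proof (rule half_bound[OF finNF mindeg[OF yS]])
    fix u w assume "u \<in> NF y" "w \<in> NF y" "u \<noteq> w"
    then have "adj E u y" "adj E w y" unfolding NF_def adj_def using FE by (auto simp: insert_commute)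
    then show "p u y + p w y \<ge> 1" using pair \<open>u \<noteq> w\<close> by blast
  qed
  define out where "out u = (\<Sum>y\<in>nbrs V E u. p u y)" for u
  have finnb: "finite (nbrs V E u)" for u using finV unfolding nbrs_def by simp
  have "(\<Sum>u\<in>S. out u) \<ge> (\<Sum>u\<in>S. \<Sum>y\<in>NF u. p u y)"
  proof (rule sum_mono)
    fix u assume "u \<in> S"
    show "(\<Sum>y\<in>NF u. p u y) \<le> out u" unfolding out_def
    proof (rule sum_mono2[OF finnb NFnb])
      fix y assume "y \<in> nbrs V E u - NF u"
      then show "0 \<le> p u y" using nn unfolding nbrs_def by auto
    qed
  qed
  also have "(\<Sum>u\<in>S. \<Sum>y\<in>NF u. p u y) = (\<Sum>u\<in>S. \<Sum>y\<in>S. if {u,y} \<in> F then p u y else 0)"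
    unfolding NF_def using finS by (simp add: sum.inter_filter)
  also have "\<dots> = (\<Sum>y\<in>S. \<Sum>u\<in>S. if {u,y} \<in> F then p u y else 0)" by (rule sum.swap)
  also have "\<dots> = (\<Sum>y\<in>S. \<Sum>u\<in>NF y. p u y)"
    unfolding NF_def using finS by (simp add: sum.inter_filter insert_commute)
  finally have t1: "(\<Sum>y\<in>S. \<Sum>u\<in>NF y. p u y) \<le> (\<Sum>u\<in>S. out u)" .
  have "(\<Sum>y\<in>S. real (card (NF y)) / 2) \<le> (\<Sum>y\<in>S. \<Sum>u\<in>NF y. p u y)"
    using lb by (rule sum_mono)
  also have "(\<Sum>y\<in>S. real (card (NF y)) / 2) = (\<Sum>y\<in>S. real (card {e\<in>F. y \<in> e})) / 2"
    using NFcard by (simp add: sum_divide_distrib)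
  also have "\<dots> = real (card F)" 
  proof -
    have "(\<Sum>y\<in>S. real (card {e\<in>F. y \<in> e})) = real (\<Sum>y\<in>S. card {e\<in>F. y \<in> e})"
      by (rule of_nat_sum[symmetric])
    also have "\<dots> = 2 * real (card F)" using hs by simp
    finally show ?thesis by simp
  qed
  finally have t2: "real (card F) \<le> (\<Sum>u\<in>S. out u)" using t1 by linarith
  show ?thesis
  proof (rule ccontr)
    assume "\<not> ?thesis"
    then have "\<And>u. u \<in> S \<Longrightarrow> out u < d / 2" using SV unfolding out_def by (meson not_le subsetD)
    then have "(\<Sum>u\<in>S. out u) < (\<Sum>u\<in>S. d / 2)" using finS Sne by (intro sum_strict_mono) auto
    also have "\<dots> = real (card S) * d / 2" by simp
    also have "\<dots> = real (card F)" using dSF sP by (simp add: field_simps)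
    finally show False using t2 by simp
  qed
qed


theorem lemma29:
  fixes V :: "'a set" and E :: "'a set set" and d :: real
  assumes "simple_graph V E"
    and "V \<noteq> {}"
    and "girth_at_least E 5"
    and "mad V E = d"
    and "d \<ge> 2"
  shows "(\<forall>p. fractional_guidance V E 2 p \<longrightarrow> frac_max_outdeg V E p \<ge> d / 2) \<and>
         (\<forall>H. weak_guidance V E 2 H \<longrightarrow> max_outdeg V H \<ge> d / 2)"
proof -
  note sg = assms(1) and g = assms(3)
  have finV: "finite V" using sg simple_graph_def by auto
  have g2: "gdist E u w 2" if "adj E u v" "adj E w v" "u \<noteq> w" for u v w
  proof -
    have "\<not> adj E u w" using no_tri[OF sg g that(1) adj_swap[OF that(2)]] adj_swap[of E u w] by blast
    then show ?thesis by (rule gdist2[OF that(1) adj_swap[OF that(2)] that(3)])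
  qed
  have A: "\<forall>p. fractional_guidance V E 2 p \<longrightarrow> frac_max_outdeg V E p \<ge> d / 2"
  proof (intro allI impI)
    fix p assume fg: "fractional_guidance V E 2 p"
    have nn: "p u v \<ge> 0" if "adj E u v" for u v
      using fg adj_V[OF sg that] that unfolding fractional_guidance_def fractional_orientation_def by blast
    have pair: "p u v + p w v \<ge> 1" if a: "adj E u v" "adj E w v" "u \<noteq> w" for u v w
    proof -
      have G1: "Gamma V E u w = {v}" by (rule Gamma_single[OF sg g a(1) adj_swap[OF a(2)] a(3)])
      have G2: "Gamma V E w u = {v}" using Gamma_single[OF sg g a(2) adj_swap[OF a(1)]] a(3) by simp
      have "gdist E u w 2" using g2[OF a] .
      moreover have "u \<in> V" "w \<in> V" using adj_V[OF sg a(1)] adj_V[OF sg a(2)] by auto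
      ultimately have "(\<Sum>y\<in>Gamma V E u w. p u y) + (\<Sum>y\<in>Gamma V E w u. p w y) \<ge> 1"
        using fg unfolding fractional_guidance_def by blast
      then show ?thesis using G1 G2 by simp
    qed
    obtain u where u: "u \<in> V" "(\<Sum>y\<in>nbrs V E u. p u y) \<ge> d / 2"
      using core[OF sg assms(2) assms(4) assms(5), of p] nn pair by blast
    have "(\<Sum>y\<in>nbrs V E u. p u y) \<le> frac_max_outdeg V E p"
      unfolding frac_max_outdeg_def using finV u(1) by (intro Max_ge) auto
    then show "frac_max_outdeg V E p \<ge> d / 2" using u(2) by linarith
  qed
  have B: "\<forall>H. weak_guidance V E 2 H \<longrightarrow> max_outdeg V H \<ge> d / 2"
  proof (intro allI impI)
    fix H assume wg: "weak_guidance V E 2 H"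
    have po: "adj E u v" if "(u,v) \<in> H" for u v
      using wg that unfolding weak_guidance_def partial_orientation_def by blast
    have B0: "Ball_H H u 0 = {u}" for u unfolding Ball_H_def by auto
    have B1: "Ball_H H u 1 \<subseteq> insert u {z. (u,z) \<in> H}" for u
    proof
      fix z assume "z \<in> Ball_H H u 1"
      then obtain k where "k \<le> 1" "(u,z) \<in> H ^^ k" unfolding Ball_H_def by auto
      then have "k = 0 \<or> k = 1" by auto
      then show "z \<in> insert u {z. (u,z) \<in> H}"
      proof
        assume "k = 0" then have "z = u" using \<open>(u,z) \<in> H ^^ k\<close> by simp
        then show ?thesis by simp
      next
        assume "k = 1" then have "(u,z) \<in> H" using \<open>(u,z) \<in> H ^^ k\<close> by simp
        then show ?thesis by simp
      qed
    qed
    define p where "p u v = (if (u,v) \<in> H then 1 else (0::real))" for u v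
    have pair: "p u v + p w v \<ge> 1" if a: "adj E u v" "adj E w v" "u \<noteq> w" for u v w
    proof -
      have gd: "gdist E u w 2" using g2[OF a] .
      have nuw: "\<not> adj E u w" using no_tri[OF sg g a(1) adj_swap[OF a(2)]] adj_swap[of E u w] by blast
      have uV: "u \<in> V" "w \<in> V" using adj_V[OF sg a(1)] adj_V[OF sg a(2)] by auto
      obtain a' b where ab: "a' + b = 1" and xy: "\<exists>x\<in>Ball_H H u a'. \<exists>y\<in>Ball_H H w b. adj E x y"
      proof -
        have "\<forall>u\<in>V. \<forall>v\<in>V. \<forall>l. u \<noteq> v \<and> gdist E u v l \<and> l \<le> 2 \<longrightarrow>
          (\<exists>a b. a + b = l - 1 \<and> (\<exists>x\<in>Ball_H H u a. \<exists>y\<in>Ball_H H v b. adj E x y))"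
          using wg unfolding weak_guidance_def by blast
        then have "\<exists>a b. a + b = 2 - 1 \<and> (\<exists>x\<in>Ball_H H u a. \<exists>y\<in>Ball_H H w b. adj E x y)"
          using uV a(3) gd by blast
        then show ?thesis using that by auto
      qed
      have cn: "z = v" if "adj E u z" "adj E w z" for z
        using no_sq[OF sg g a(1) adj_swap[OF a(2)] that(2) adj_swap[OF that(1)] a(3)] by blast
      have "(u,v) \<in> H \<or> (w,v) \<in> H"
      proof -
        from xy obtain x y where x: "x \<in> Ball_H H u a'" and y: "y \<in> Ball_H H w b" and xya: "adj E x y"
          by blast
        show ?thesis
        proof (cases "a' = 0")
          case True
          then have "b = 1" using ab by simp
          then have y1: "y \<in> insert w {z. (w,z) \<in> H}" using y B1[of w] by blast
          have "x = u" using x True B0[of u] by simp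
          then have "adj E u y" using xya by simp
          then have "y \<noteq> w" using nuw by auto
          then have wy: "(w,y) \<in> H" using y1 by simp
          have "y = v" using cn[OF \<open>adj E u y\<close> po[OF wy]] .
          then show ?thesis using wy by simp
        next
          case False
          then have "a' = 1" "b = 0" using ab by auto
          then have x1: "x \<in> insert u {z. (u,z) \<in> H}" using x B1[of u] by blast
          have "y = w" using y \<open>b = 0\<close> B0[of w] by simp
          then have "adj E x w" using xya by simp
          then have "x \<noteq> u" using nuw by auto
          then have ux: "(u,x) \<in> H" using x1 by simp
          have "x = v" using cn[OF po[OF ux] adj_swap[OF \<open>adj E x w\<close>]] .
          then show ?thesis using ux by simp
        qed
      qed
      then show ?thesis unfolding p_def by auto
    qed
    have nn: "p u v \<ge> 0" for u v unfolding p_def by simp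
    obtain u where u: "u \<in> V" "(\<Sum>y\<in>nbrs V E u. p u y) \<ge> d / 2"
      using core[OF sg assms(2) assms(4) assms(5), of p] nn pair by blast
    have finnb: "finite (nbrs V E u)" using finV unfolding nbrs_def by simp
    have "(\<Sum>y\<in>{y\<in>nbrs V E u. (u,y) \<in> H}. (1::real)) = (\<Sum>y\<in>nbrs V E u. p u y)"
      unfolding p_def by (rule sum.inter_filter[OF finnb])
    then have "(\<Sum>y\<in>nbrs V E u. p u y) = real (card {y\<in>nbrs V E u. (u,y) \<in> H})"
      by simp
    also have "{y\<in>nbrs V E u. (u,y) \<in> H} = {v. (u,v) \<in> H}"
    proof
      show "{y\<in>nbrs V E u. (u,y) \<in> H} \<subseteq> {v. (u,v) \<in> H}" by auto
      show "{v. (u,v) \<in> H} \<subseteq> {y\<in>nbrs V E u. (u,y) \<in> H}"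
      proof
        fix v assume "v \<in> {v. (u,v) \<in> H}"
        then have "(u,v) \<in> H" by simp
        then have "adj E u v" by (rule po)
        then have "v \<in> V" by (rule adj_V(2)[OF sg])
        then show "v \<in> {y\<in>nbrs V E u. (u,y) \<in> H}" unfolding nbrs_def using \<open>adj E u v\<close> \<open>(u,v) \<in> H\<close> by simp
      qed
    qed
    finally have "real (card {v. (u,v) \<in> H}) \<ge> d / 2" using u(2) by simp
    moreover have "real (card {v. (u,v) \<in> H}) \<le> max_outdeg V H"
      unfolding max_outdeg_def using finV u(1) by (intro Max_ge) auto
    ultimately show "max_outdeg V H \<ge> d / 2" by linarith
  qed
  show ?thesis using A B by blast
qed

end
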